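(* For every $\delta\in(0,1]$ there is a constant $c_\delta>0$ such that the following holds. Let $A=\{a_1<a_2<\dots<a_k\}\subset\mathbb{R}$ and let $D=\{a_{i+1}-a_i: 1\le i\le k-1\}$ be its set of consecutive differences. If $|D|\ge \delta|A|$, then for every finite nonempty $B\subset\mathbb{R}$, \[ |A+B|\ge c_\delta\,|A|\,|B|^{1/2}. \]
   Context: For finite $A,B\subset\mathbb{R}$, $A+B=\{a+b: a\in A, b\in B\}$. *)

theory Defs
  imports Complex_Main
begin

definition sumset :: "real set \<Rightarrow> real set \<Rightarrow> real set" where
  "sumset A B = {a + b | a b. a \<in> A \<and> b \<in> B}"

definition cons_diffs :: "real set \<Rightarrow> real set" where
  "cons_diffs A = (let s = sorted_list_of_set A in
     {s ! (i + 1) - s ! i | i. i + 1 < length s})"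

end

theory Submission
  imports Defs
begin

lemma key:
  fixes A B :: "real set"
  assumes fA: "finite A" and fB: "finite B" and Bne: "B \<noteq> {}"
  shows "(card (cons_diffs A) * card B)^2 \<le> 4 * card (sumset A B)^2 * card B"
proof -
  define s where "s = sorted_list_of_set A"
  define S where "S = sumset A B"
  define N where "N = card S"
  define d where "d = (\<lambda>i. s!(i+1) - s!i)"
  have setS: "set s = A" using fA by (simp add: s_def)
  have ss: "sorted_wrt (<) s" unfolding s_def by (rule strict_sorted_list_of_set)
  have srt: "sorted s" unfolding s_def by simp
  have cd: "cons_diffs A = d ` {i. i+1 < length s}"
    unfolding cons_diffs_def d_def s_def Let_def by auto
  obtain I where I: "I \<subseteq> {i. i+1 < length s}" "inj_on d I" "cons_diffs A = d ` I"
    using subset_image_inj[of "cons_diffs A" d "{i. i+1 < length s}"] cd by auto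
  have finI: "finite I" using I(1) by (rule finite_subset) (auto intro: finite_subset[of _ "{..<length s}"])
  have m: "card (cons_diffs A) = card I" using I card_image by metis
  have SS: "S = (\<lambda>(a,b). a+b) ` (A \<times> B)" unfolding S_def sumset_def by auto
  have finS: "finite S" using SS fA fB by simp
  show ?thesis
  proof (cases "I = {}")
    case True then show ?thesis using m by simp
  next
    case False
    then obtain i0 where "i0 \<in> I" by auto
    then have "s!i0 \<in> A" using I(1) setS by auto
    moreover obtain b0 where "b0 \<in> B" using Bne by auto
    ultimately have "s!i0 + b0 \<in> S" unfolding S_def sumset_def by auto
    then have Npos: "N > 0" unfolding N_def using finS card_gt_0_iff by blast
    define g where "g = (\<lambda>b i. card {z\<in>S. s!i+b < z \<and> z \<le> s!(i+1)+b})"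
    have mem: "s!i + b \<in> S" if "i < length s" "b \<in> B" for i b
      using that setS nth_mem[of i s] unfolding S_def sumset_def by blast
    have lt: "s!i < s!(i+1)" if "i+1 < length s" for i
      using sorted_wrt_nth_less[OF ss, of i "i+1"] that by simp
    have g1: "g b i \<ge> 1" if "i \<in> I" "b \<in> B" for b i
    proof -
      have "s!(i+1)+b \<in> {z\<in>S. s!i+b < z \<and> z \<le> s!(i+1)+b}"
        using mem[of "i+1" b] lt[of i] that I(1) by auto
      moreover have "finite {z\<in>S. s!i+b < z \<and> z \<le> s!(i+1)+b}" using finS by simp
      ultimately have "card {z\<in>S. s!i+b < z \<and> z \<le> s!(i+1)+b} > 0" using card_gt_0_iff by blast
      then show ?thesis unfolding g_def by simp
    qed
    have sumb: "(\<Sum>i\<in>I. g b i) \<le> N" if "b \<in> B" for b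
    proof -
      define F where "F = (\<lambda>i. {z\<in>S. s!i+b < z \<and> z \<le> s!(i+1)+b})"
      have fF: "\<forall>i\<in>I. finite (F i)" using finS unfolding F_def by auto
      have disj: "\<forall>i\<in>I. \<forall>j\<in>I. i \<noteq> j \<longrightarrow> F i \<inter> F j = {}"
      proof (intro ballI impI)
        fix i j assume ij: "i \<in> I" "j \<in> I" "i \<noteq> j"
        have aux: "F i \<inter> F j = {}" if "i < j" "j \<in> I" for i j
        proof -
          have "s!(i+1) \<le> s!j" using sorted_nth_mono[OF srt, of "i+1" j] that I(1) by auto
          then show ?thesis unfolding F_def by auto
        qed
        show "F i \<inter> F j = {}"
        proof (cases "i < j")
          case True then show ?thesis using aux ij by auto
        next
          case False then have "j < i" using ij by auto
          then show ?thesis using aux ij by auto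
        qed
      qed
      have "(\<Sum>i\<in>I. g b i) = (\<Sum>i\<in>I. card (F i))" unfolding g_def F_def by simp
      also have "\<dots> = card (\<Union>i\<in>I. F i)" using card_UN_disjoint[OF finI fF disj] by simp
      also have "\<dots> \<le> N" unfolding N_def by (rule card_mono[OF finS]) (auto simp: F_def)
      finally show ?thesis .
    qed
    define P where "P = B \<times> I"
    define g' where "g' = (\<lambda>(b,i). g b i)"
    define M where "M = card P"
    have M: "M = card B * card I" unfolding M_def P_def by (simp add: card_cartesian_product)
    have finP: "finite P" unfolding P_def using fB finI by simp
    have injP: "inj_on (\<lambda>(b,i). (s!i+b, g b i)) P"
    proof (rule inj_onI, clarify)
      fix b i b' i'
      assume p: "(b,i) \<in> P" "(b',i') \<in> P" and e: "s!i+b = s!i'+b'" "g b i = g b' i'"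
      define x where "x = s!i+b"
      define y where "y = s!(i+1)+b"
      define y' where "y' = s!(i'+1)+b'"
      have ii: "i \<in> I" "i' \<in> I" "b \<in> B" "b' \<in> B" using p unfolding P_def by auto
      have yS: "y \<in> S" "y' \<in> S" unfolding y_def y'_def using mem ii I(1) by auto
      have xy: "x < y" "x < y'" proof -
        have "s!i < s!(i+1)" "s!i' < s!(i'+1)" using lt ii I(1) by auto
        then show "x < y" "x < y'" using e(1) unfolding x_def y_def y'_def by auto
      qed
      have gy: "g b i = card {z\<in>S. x < z \<and> z \<le> y}" "g b' i' = card {z\<in>S. x < z \<and> z \<le> y'}"
      proof -
        show "g b i = card {z\<in>S. x < z \<and> z \<le> y}" unfolding g_def x_def y_def by simp
        show "g b' i' = card {z\<in>S. x < z \<and> z \<le> y'}" unfolding g_def x_def y'_def e(1) by simp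
      qed
      have strict: "card {z\<in>S. x < z \<and> z \<le> u} < card {z\<in>S. x < z \<and> z \<le> v}"
        if "u < v" "v \<in> S" "x < v" for u v
      proof (rule psubset_card_mono)
        show "finite {z\<in>S. x < z \<and> z \<le> v}" using finS by simp
        have "v \<notin> {z\<in>S. x < z \<and> z \<le> u}" using that by simp
        moreover have "v \<in> {z\<in>S. x < z \<and> z \<le> v}" using that by simp
        moreover have "{z\<in>S. x < z \<and> z \<le> u} \<subseteq> {z\<in>S. x < z \<and> z \<le> v}" using that by auto
        ultimately show "{z\<in>S. x < z \<and> z \<le> u} \<subset> {z\<in>S. x < z \<and> z \<le> v}" by blast
      qed
      have "y = y'"
      proof (rule ccontr)
        assume "y \<noteq> y'"
        then have "y < y' \<or> y' < y" by auto
        then show False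
        proof
          assume "y < y'"
          then have "card {z\<in>S. x < z \<and> z \<le> y} < card {z\<in>S. x < z \<and> z \<le> y'}"
            using strict yS xy by blast
          then show False using gy e(2) by simp
        next
          assume "y' < y"
          then have "card {z\<in>S. x < z \<and> z \<le> y'} < card {z\<in>S. x < z \<and> z \<le> y}"
            using strict yS xy by blast
          then show False using gy e(2) by simp
        qed
      qed
      then have "d i = d i'" unfolding d_def y_def y'_def using e(1) by simp
      then have "i = i'" using I(2) ii inj_on_def by metis
      then show "b = b' \<and> i = i'" using e(1) by simp
    qed
    define T where "T = M div (2*N)"
    define L where "L = {p\<in>P. g' p \<le> T}"
    define H where "H = P - L"
    have cardL: "card L \<le> N * T"
    proof -
      have "card L \<le> card (S \<times> {1..T})"
      proof (rule card_inj_on_le[where f="\<lambda>(b,i). (s!i+b, g b i)"])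
        show "inj_on (\<lambda>(b,i). (s!i+b, g b i)) L" by (rule inj_on_subset[OF injP]) (auto simp: L_def)
        show "(\<lambda>(b,i). (s!i+b, g b i)) ` L \<subseteq> S \<times> {1..T}"
        proof
          fix q assume "q \<in> (\<lambda>(b,i). (s!i+b, g b i)) ` L"
          then obtain b i where bi: "(b,i) \<in> L" "q = (s!i+b, g b i)" by auto
          then have "b \<in> B" "i \<in> I" "g b i \<le> T" unfolding L_def P_def g'_def by auto
          moreover have "i < length s" using \<open>i \<in> I\<close> I(1) by auto
          ultimately show "q \<in> S \<times> {1..T}" using mem g1 bi(2) by auto
        qed
        show "finite (S \<times> {1..T})" using finS by simp
      qed
      moreover have "card (S \<times> {1..T}) = N * T" unfolding N_def by (simp add: card_cartesian_product)
      ultimately show ?thesis by simp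
    qed
    have cardH: "card H = M - card L" unfolding H_def M_def
      by (rule card_Diff_subset) (use finP L_def in auto)
    have "(T+1) * card H = (\<Sum>p\<in>H. T+1)" by simp
    also have "\<dots> \<le> (\<Sum>p\<in>H. g' p)" by (rule sum_mono) (auto simp: H_def L_def)
    also have "\<dots> \<le> (\<Sum>p\<in>P. g' p)" by (rule sum_mono2) (use finP H_def in auto)
    also have "\<dots> = (\<Sum>b\<in>B. \<Sum>i\<in>I. g b i)" unfolding P_def g'_def
      by (simp add: sum.cartesian_product)
    also have "\<dots> \<le> (\<Sum>b\<in>B. N)" by (rule sum_mono) (use sumb in auto)
    also have "\<dots> = card B * N" by simp
    finally have m0: "(T+1) * card H \<le> card B * N" .
    have "M - N*T \<le> card H" using cardH cardL by linarith
    then have "(T+1) * (M - N*T) \<le> (T+1) * card H" by (rule mult_le_mono2)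
    with m0 have main: "(T+1) * (M - N*T) \<le> card B * N" by linarith
    have dm: "M = 2*N*T + M mod (2*N)" unfolding T_def by simp
    have mm: "M mod (2*N) < 2*N" using Npos by simp
    have t1: "2*N*T \<le> M" using dm by linarith
    have t2: "M \<le> 2*N*(T+1)" using dm mm by (simp add: algebra_simps)
    have h1: "M \<le> 2*(M - N*T)" using t1 by simp
    have "M * M \<le> (2*N*(T+1)) * (2*(M - N*T))" using t2 h1 mult_le_mono by blast
    also have "\<dots> = 4*N*((T+1)*(M - N*T))"
    proof -
      have "\<And>R::nat. (2*N*(T+1)) * (2*R) = 4*N*((T+1)*R)" by (simp add: algebra_simps)
      then show ?thesis .
    qed
    also have "\<dots> \<le> 4*N*(card B * N)" using main by simp
    finally have MM: "M*M \<le> 4*N*(card B*N)" .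
    have e1: "card (cons_diffs A) * card B = M" using m M by simp
    have gen: "\<And>x y::nat. 4*x^2*y = 4*x*(y*x)" by (simp add: power2_eq_square algebra_simps)
    have "(card (cons_diffs A) * card B)^2 = M*M" unfolding e1 power2_eq_square ..
    also note MM
    also have "4*N*(card B*N) = 4*N^2*card B" by (rule gen[symmetric])
    finally show ?thesis unfolding N_def S_def .
  qed
qed

theorem theorem2:
  fixes \<delta> :: real
  assumes "0 < \<delta>" and "\<delta> \<le> 1"
  shows "\<exists>c > 0. \<forall>A B :: real set. finite A \<longrightarrow> finite B \<longrightarrow> B \<noteq> {} \<longrightarrow>
           real (card (cons_diffs A)) \<ge> \<delta> * real (card A) \<longrightarrow>
           real (card (sumset A B)) \<ge> c * real (card A) * sqrt (real (card B))"
proof (intro exI[of _ "\<delta>/2"] conjI allI impI)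
  show "\<delta>/2 > 0" using assms by simp
  fix A B :: "real set"
  assume fA: "finite A" and fB: "finite B" and Bne: "B \<noteq> {}"
    and hd: "real (card (cons_diffs A)) \<ge> \<delta> * real (card A)"
  define m where "m = real (card (cons_diffs A))"
  define b where "b = real (card B)"
  define N where "N = real (card (sumset A B))"
  have "card B > 0" using fB Bne by (simp add: card_gt_0_iff)
  then have bpos: "b > 0" unfolding b_def by simp
  have "real ((card (cons_diffs A) * card B)^2) \<le> real (4 * card (sumset A B)^2 * card B)"
    by (rule of_nat_mono[OF key[OF fA fB Bne]])
  then have "(m*b)^2 \<le> 4 * N^2 * b" unfolding m_def b_def N_def by simp
  then have "m^2 * b * b \<le> (4 * N^2) * b" by (simp add: power2_eq_square algebra_simps)
  then have h: "m^2 * b \<le> 4 * N^2" using bpos by simp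
  have "m * sqrt b = sqrt (m^2 * b)" unfolding m_def by (simp add: real_sqrt_mult)
  also have "\<dots> \<le> sqrt (4 * N^2)" using h by simp
  also have "\<dots> = 2 * N" unfolding N_def by (simp add: real_sqrt_mult)
  finally have h2: "m * sqrt b \<le> 2 * N" .
  have hd': "\<delta> * real (card A) \<le> m" using hd unfolding m_def .
  have "\<delta> * real (card A) * sqrt b \<le> m * sqrt b"
    by (rule mult_right_mono[OF hd']) (use bpos in simp)
  from this h2 have "\<delta> * real (card A) * sqrt b \<le> 2 * N" by (rule order_trans)
  then have "\<delta>/2 * real (card A) * sqrt b \<le> N" by simp
  then show "\<delta>/2 * real (card A) * sqrt (real (card B)) \<le> real (card (sumset A B))"
    unfolding b_def N_def .
qed

end
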